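(* For $n\ge0$ let $\mathcal{M}_n$ be the set of perfect matchings of $[2n]$. Then $$\sum_{n\ge0}\sum_{M\in\mathcal{M}_n} r^{c(M)}s^{p(M)}t^{\mathrm{da}(M)}\frac{x^n}{n!}=\frac{e^{(r-t)x+(s-t^2)x^2}}{\sqrt{1-2tx}}.$$
   Context: $[2n]=\{1,\dots,2n\}$. For $A\subseteq[2n]$ let $\overline{A}=\{2n+1-i: i\in A\}$. An arc $\{i,j\}$ of $M\in\mathcal{M}_n$ is centered if $\overline{\{i,j\}}=\{i,j\}$; coupled if it is not centered but $\overline{\{i,j\}}\in M$ (then $\{i,j\},\overline{\{i,j\}}$ form a pair of coupled arcs); asymmetric otherwise. $c(M)$ is the number of centered arcs, $p(M)$ the number of pairs of coupled arcs, and $\mathrm{da}(M)$ the number of asymmetric arcs. *)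

theory Defs
  imports "HOL-Computational_Algebra.Formal_Power_Series"
begin

definition perfect_matchings :: "nat \<Rightarrow> nat set set set" where
  "perfect_matchings n =
     {M. (\<forall>e\<in>M. e \<subseteq> {1..2*n} \<and> card e = 2) \<and> (\<forall>x\<in>{1..2*n}. \<exists>!e. e \<in> M \<and> x \<in> e)}"

definition refl_set :: "nat \<Rightarrow> nat set \<Rightarrow> nat set" where
  "refl_set n A = (\<lambda>i. 2*n + 1 - i) ` A"

definition centered_arcs :: "nat \<Rightarrow> nat set set \<Rightarrow> nat set set" where
  "centered_arcs n M = {e \<in> M. refl_set n e = e}"

definition coupled_arcs :: "nat \<Rightarrow> nat set set \<Rightarrow> nat set set" where
  "coupled_arcs n M = {e \<in> M. refl_set n e \<noteq> e \<and> refl_set n e \<in> M}"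

definition asymmetric_arcs :: "nat \<Rightarrow> nat set set \<Rightarrow> nat set set" where
  "asymmetric_arcs n M = {e \<in> M. refl_set n e \<notin> M}"

definition cnum :: "nat \<Rightarrow> nat set set \<Rightarrow> nat" where
  "cnum n M = card (centered_arcs n M)"

definition pnum :: "nat \<Rightarrow> nat set set \<Rightarrow> nat" where
  "pnum n M = card (coupled_arcs n M) div 2"

definition danum :: "nat \<Rightarrow> nat set set \<Rightarrow> nat" where
  "danum n M = card (asymmetric_arcs n M)"

end

theory Submission
  imports Defs
begin

unbundle fps_syntax

definition sg :: "nat \<Rightarrow> nat \<Rightarrow> nat" where "sg N i = 2*N+1-i"

definition PM :: "nat set \<Rightarrow> nat set set set" where
  "PM X = {M. (\<forall>e\<in>M. e \<subseteq> X \<and> card e = 2) \<and> (\<forall>x\<in>X. \<exists>!e. e \<in> M \<and> x \<in> e)}"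

definition invs :: "nat \<Rightarrow> nat set \<Rightarrow> bool" where
  "invs N X \<longleftrightarrow> X \<subseteq> {1..2*N} \<and> (\<forall>x\<in>X. sg N x \<in> X)"

definition wt :: "real \<Rightarrow> real \<Rightarrow> real \<Rightarrow> nat \<Rightarrow> nat set set \<Rightarrow> real" where
  "wt r s t N M = r ^ cnum N M * s ^ pnum N M * t ^ danum N M"

lemma pm_eq: "perfect_matchings n = PM {1..2*n}"
  by (simp add: perfect_matchings_def PM_def)

lemma refl_sg: "refl_set N A = sg N ` A"
  by (simp add: refl_set_def sg_def)

lemma sg_in: "x \<in> {1..2*N} \<Longrightarrow> sg N x \<in> {1..2*N}"
  by (auto simp: sg_def)

lemma sg_sg: "x \<in> {1..2*N} \<Longrightarrow> sg N (sg N x) = x"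
  by (auto simp: sg_def)

lemma sg_neq: "sg N x \<noteq> x"
  unfolding sg_def by presburger

lemma sg_inj: "x \<in> {1..2*N} \<Longrightarrow> y \<in> {1..2*N} \<Longrightarrow> sg N x = sg N y \<longleftrightarrow> x = y"
  by (auto simp: sg_def)

lemma refl_refl: "e \<subseteq> {1..2*N} \<Longrightarrow> refl_set N (refl_set N e) = e"
proof -
  assume e: "e \<subseteq> {1..2*N}"
  have "sg N (sg N x) = x" if "x \<in> e" for x using that e sg_sg[of x N] by blast
  then show ?thesis unfolding refl_sg image_image by simp
qed

lemma refl_sub: "e \<subseteq> {1..2*N} \<Longrightarrow> refl_set N e \<subseteq> {1..2*N}"
  unfolding refl_sg using sg_in by blast

lemma refl_pair: "refl_set N {a,b} = {sg N a, sg N b}"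
  by (simp add: refl_sg)

lemma even_invol:
  assumes "finite A" "\<forall>x\<in>A. f x \<in> A \<and> f x \<noteq> x \<and> f (f x) = x"
  shows "even (card A)"
  using assms
proof (induction "card A" arbitrary: A rule: less_induct)
  case less
  show ?case
  proof (cases "A = {}")
    case True then show ?thesis by simp
  next
    case False
    then obtain x where x: "x \<in> A" by blast
    define A' where "A' = A - {x, f x}"
    have fx: "f x \<in> A" "f x \<noteq> x" using less.prems x by auto
    have cA: "card A = card A' + 2"
    proof -
      have sub: "{x, f x} \<subseteq> A" using fx x by simp
      have c2: "card {x, f x} = 2" using fx by simp
      have "card A' = card A - 2" unfolding A'_def using card_Diff_subset[OF _ sub] c2 by simp
      moreover have "2 \<le> card A" using card_mono[OF less.prems(1) sub] c2 by simp
      ultimately show ?thesis by simp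
    qed
    have "even (card A')"
    proof (rule less.hyps)
      show "card A' < card A" using cA by simp
      show "finite A'" using less.prems(1) by (simp add: A'_def)
      show "\<forall>y\<in>A'. f y \<in> A' \<and> f y \<noteq> y \<and> f (f y) = y"
      proof
        fix y assume y: "y \<in> A'"
        then have yA: "y \<in> A" "y \<noteq> x" "y \<noteq> f x" unfolding A'_def by auto
        have P: "f y \<in> A" "f y \<noteq> y" "f (f y) = y" using less.prems(2) yA(1) by auto
        have Px: "f (f x) = x" using less.prems(2) x by auto
        have "f y \<noteq> x" using P(3) yA(3) by auto
        moreover have "f y \<noteq> f x" using P(3) Px yA(2) by metis
        ultimately show "f y \<in> A' \<and> f y \<noteq> y \<and> f (f y) = y" using P unfolding A'_def by auto
      qed
    qed
    then show ?thesis using cA by simp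
  qed
qed

lemma pm_sub_pow: "PM X \<subseteq> Pow (Pow X)"
  unfolding PM_def by blast

lemma pm_finite: "finite X \<Longrightarrow> finite (PM X)"
  using finite_subset[OF pm_sub_pow] by simp

lemma pm_arcs_finite: "finite X \<Longrightarrow> M \<in> PM X \<Longrightarrow> finite M"
  using pm_sub_pow[of X] finite_subset[of M "Pow X"] by auto

lemma pm_arc: "M \<in> PM X \<Longrightarrow> e \<in> M \<Longrightarrow> \<exists>a b. e = {a,b} \<and> a \<noteq> b \<and> a \<in> X \<and> b \<in> X"
proof -
  assume M: "M \<in> PM X" and e: "e \<in> M"
  then have "e \<subseteq> X" "card e = 2" unfolding PM_def by auto
  then obtain a b where "e = {a,b}" "a \<noteq> b" by (auto simp: card_2_iff)
  then show ?thesis using \<open>e \<subseteq> X\<close> by auto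
qed

lemma pm_sub: "M \<in> PM X \<Longrightarrow> e \<in> M \<Longrightarrow> e \<subseteq> X"
  unfolding PM_def by auto

lemma pm_uniq: "M \<in> PM X \<Longrightarrow> e \<in> M \<Longrightarrow> e' \<in> M \<Longrightarrow> x \<in> e \<Longrightarrow> x \<in> e' \<Longrightarrow> e = e'"
proof -
  assume M: "M \<in> PM X" and e: "e \<in> M" "e' \<in> M" "x \<in> e" "x \<in> e'"
  have "x \<in> X" using pm_sub[OF M e(1)] e(3) by blast
  then have "\<exists>!e. e \<in> M \<and> x \<in> e" using M unfolding PM_def by blast
  then show "e = e'" using e by blast
qed

lemma pm_partner: "M \<in> PM X \<Longrightarrow> x \<in> X \<Longrightarrow> \<exists>!u. {x,u} \<in> M"
proof -
  assume M: "M \<in> PM X" and x: "x \<in> X"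
  then obtain e where e: "e \<in> M" "x \<in> e" unfolding PM_def by blast
  then obtain a b where ab: "e = {a,b}" "a \<noteq> b" using pm_arc[OF M] by blast
  then obtain u where u: "e = {x,u}" using e by auto
  show ?thesis
  proof (rule ex1I[of _ u])
    show "{x,u} \<in> M" using u e by simp
    fix v assume "{x,v} \<in> M"
    then have "{x,v} = {x,u}" using pm_uniq[OF M _ e(1), of "{x,v}" x] u by simp
    then show "v = u" by (simp add: doubleton_eq_iff) blast
  qed
qed

lemma pm_partner_neq: "M \<in> PM X \<Longrightarrow> {x,u} \<in> M \<Longrightarrow> u \<noteq> x \<and> u \<in> X \<and> x \<in> X"
proof -
  assume M: "M \<in> PM X" and e: "{x,u} \<in> M"
  have "card {x,u} = 2" "{x,u} \<subseteq> X" using M e unfolding PM_def by auto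
  then show ?thesis by (cases "u = x") auto
qed

lemma pm_empty: "PM {} = {{}}"
proof -
  have "M = {}" if "\<forall>e\<in>M. e \<subseteq> {} \<and> card e = 2" for M :: "nat set set"
    using that by fastforce
  then show ?thesis unfolding PM_def by auto
qed


lemma pm_union:
  assumes E: "E \<in> PM Y" and M0: "M0 \<in> PM Z" and d: "Y \<inter> Z = {}"
  shows "M0 \<union> E \<in> PM (Y \<union> Z)"
  unfolding PM_def
proof (intro CollectI conjI ballI)
  fix e assume "e \<in> M0 \<union> E"
  then show "e \<subseteq> Y \<union> Z" "card e = 2" using E M0 unfolding PM_def by auto
next
  fix x assume x: "x \<in> Y \<union> Z"
  show "\<exists>!e. e \<in> M0 \<union> E \<and> x \<in> e"
  proof (cases "x \<in> Y")
    case True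
    then obtain e where e: "e \<in> E" "x \<in> e" using E unfolding PM_def by blast
    show ?thesis
    proof (rule ex1I[of _ e])
      show "e \<in> M0 \<union> E \<and> x \<in> e" using e by simp
      fix e' assume e': "e' \<in> M0 \<union> E \<and> x \<in> e'"
      have "e' \<notin> M0"
      proof
        assume "e' \<in> M0"
        then have "x \<in> Z" using pm_sub[OF M0] e' by blast
        then show False using True d by blast
      qed
      then show "e' = e" using pm_uniq[OF E _ e(1), of e' x] e' e by blast
    qed
  next
    case False
    then have xZ: "x \<in> Z" using x by simp
    then obtain e where e: "e \<in> M0" "x \<in> e" using M0 unfolding PM_def by blast
    show ?thesis
    proof (rule ex1I[of _ e])
      show "e \<in> M0 \<union> E \<and> x \<in> e" using e by simp
      fix e' assume e': "e' \<in> M0 \<union> E \<and> x \<in> e'"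
      have "e' \<notin> E"
      proof
        assume "e' \<in> E"
        then have "x \<in> Y" using pm_sub[OF E] e' by blast
        then show False using False by blast
      qed
      then show "e' = e" using pm_uniq[OF M0 _ e(1), of e' x] e' e by blast
    qed
  qed
qed

lemma pm_nonempty_arc: "M \<in> PM X \<Longrightarrow> e \<in> M \<Longrightarrow> e \<noteq> {}"
  unfolding PM_def by auto

lemma pm_disj:
  assumes E: "E \<in> PM Y" and M0: "M0 \<in> PM Z" and d: "Y \<inter> Z = {}"
  shows "M0 \<inter> E = {}"
proof (rule ccontr)
  assume "M0 \<inter> E \<noteq> {}"
  then obtain e where e: "e \<in> M0" "e \<in> E" by blast
  then obtain x where "x \<in> e" using pm_nonempty_arc[OF E] by blast
  then show False using pm_sub[OF E e(2)] pm_sub[OF M0 e(1)] d by blast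
qed

lemma pm_diff:
  assumes M: "M \<in> PM X" and EM: "E \<subseteq> M" and E: "E \<in> PM Y"
  shows "M - E \<in> PM (X - Y)"
  unfolding PM_def
proof (intro CollectI conjI ballI)
  fix e assume e: "e \<in> M - E"
  show "card e = 2" using e M unfolding PM_def by auto
  have "e \<inter> Y = {}"
  proof (rule ccontr)
    assume "e \<inter> Y \<noteq> {}"
    then obtain y where y: "y \<in> e" "y \<in> Y" by blast
    then obtain e' where e': "e' \<in> E" "y \<in> e'" using E unfolding PM_def by blast
    then have "e = e'" using pm_uniq[OF M _ _ y(1) e'(2)] e EM by blast
    then show False using e e' by blast
  qed
  then show "e \<subseteq> X - Y" using pm_sub[OF M] e by blast
next
  fix x assume x: "x \<in> X - Y"
  then obtain e where e: "e \<in> M" "x \<in> e" using M unfolding PM_def by blast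
  have eE: "e \<notin> E" using pm_sub[OF E] x e by blast
  show "\<exists>!e. e \<in> M - E \<and> x \<in> e"
  proof (rule ex1I[of _ e])
    show "e \<in> M - E \<and> x \<in> e" using e eE by simp
    fix e' assume "e' \<in> M - E \<and> x \<in> e'"
    then show "e' = e" using pm_uniq[OF M _ e(1), of e' x] e by blast
  qed
qed

lemma sum_remove:
  assumes X: "finite X" and E: "E \<in> PM Y" and YX: "Y \<subseteq> X"
  shows "(\<Sum>M\<in>{M\<in>PM X. E \<subseteq> M}. g M) = (\<Sum>M0\<in>PM (X - Y). g (M0 \<union> E))"
proof (rule sum.reindex_bij_witness[of _ "\<lambda>M0. M0 \<union> E" "\<lambda>M. M - E"])
  fix M assume M: "M \<in> {M\<in>PM X. E \<subseteq> M}"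
  then show "M - E \<union> E = M" by auto
  show "M - E \<in> PM (X - Y)" using pm_diff[OF _ _ E] M by auto
  show "g (M - E \<union> E) = g M" using M by (simp add: Un_absorb2)
next
  fix M0 assume M0: "M0 \<in> PM (X - Y)"
  have d: "M0 \<inter> E = {}" using pm_disj[OF E M0] by blast
  then show "M0 \<union> E - E = M0" by blast
  have "M0 \<union> E \<in> PM (Y \<union> (X - Y))" using pm_union[OF E M0] by blast
  moreover have "Y \<union> (X - Y) = X" using YX by blast
  ultimately show "M0 \<union> E \<in> {M\<in>PM X. E \<subseteq> M}" by simp
qed

lemma sum_partner:
  assumes X: "finite X" and a: "a \<in> X"
  shows "sum g (PM X) = (\<Sum>u\<in>X-{a}. \<Sum>M\<in>{M\<in>PM X. {{a,u}} \<subseteq> M}. g M)"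
proof -
  have "(\<Sum>u\<in>X-{a}. \<Sum>M\<in>{M\<in>PM X. {{a,u}} \<subseteq> M}. g M)
      = (\<Sum>u\<in>X-{a}. \<Sum>M\<in>PM X. if {a,u} \<in> M then g M else 0)"
    using pm_finite[OF X] by (simp add: sum.inter_filter)
  also have "\<dots> = (\<Sum>M\<in>PM X. \<Sum>u\<in>X-{a}. if {a,u} \<in> M then g M else 0)"
    by (rule sum.swap)
  also have "\<dots> = (\<Sum>M\<in>PM X. g M)"
  proof (rule sum.cong[OF refl])
    fix M assume M: "M \<in> PM X"
    obtain u0 where u0: "{a,u0} \<in> M" using pm_partner[OF M a] by blast
    have u0X: "u0 \<in> X - {a}" using pm_partner_neq[OF M u0] by auto
    have "(\<Sum>u\<in>X-{a}. if {a,u} \<in> M then g M else 0) = (\<Sum>u\<in>X-{a}. if u = u0 then g M else 0)"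
    proof (rule sum.cong[OF refl])
      fix u assume "u \<in> X - {a}"
      have "{a,u} \<in> M \<longleftrightarrow> u = u0" using pm_partner[OF M a] u0 by blast
      then show "(if {a,u} \<in> M then g M else 0) = (if u = u0 then g M else 0)" by simp
    qed
    also have "\<dots> = g M" using u0X X by (simp add: sum.delta)
    finally show "(\<Sum>u\<in>X-{a}. if {a,u} \<in> M then g M else 0) = g M" .
  qed
  finally show ?thesis by simp
qed


lemma coupled_even:
  assumes S: "finite S" and sub: "\<forall>e\<in>S. e \<subseteq> {1..2*N}"
  shows "even (card (coupled_arcs N S))"
proof (rule even_invol[where f = "refl_set N"])
  show "finite (coupled_arcs N S)" using S unfolding coupled_arcs_def by simp
  show "\<forall>x\<in>coupled_arcs N S. refl_set N x \<in> coupled_arcs N S \<and> refl_set N x \<noteq> x \<and> refl_set N (refl_set N x) = x"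
  proof
    fix e assume e: "e \<in> coupled_arcs N S"
    then have eS: "e \<in> S" "refl_set N e \<noteq> e" "refl_set N e \<in> S" unfolding coupled_arcs_def by auto
    have rr: "refl_set N (refl_set N e) = e" using refl_refl sub eS(1) by blast
    show "refl_set N e \<in> coupled_arcs N S \<and> refl_set N e \<noteq> e \<and> refl_set N (refl_set N e) = e"
      using eS rr unfolding coupled_arcs_def by auto
  qed
qed

lemma wt_union:
  assumes f0: "finite M0" and fE: "finite E" and d: "M0 \<inter> E = {}"
    and sub: "\<forall>e\<in>M0 \<union> E. e \<subseteq> {1..2*N}"
    and c1: "\<forall>e\<in>M0. refl_set N e \<notin> E" and c2: "\<forall>e\<in>E. refl_set N e \<notin> M0"
  shows "wt r s t N (M0 \<union> E) = wt r s t N M0 * wt r s t N E"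
proof -
  have C: "centered_arcs N (M0 \<union> E) = centered_arcs N M0 \<union> centered_arcs N E"
    unfolding centered_arcs_def by blast
  have P: "coupled_arcs N (M0 \<union> E) = coupled_arcs N M0 \<union> coupled_arcs N E"
    unfolding coupled_arcs_def using c1 c2 by blast
  have A: "asymmetric_arcs N (M0 \<union> E) = asymmetric_arcs N M0 \<union> asymmetric_arcs N E"
    unfolding asymmetric_arcs_def using c1 c2 by blast
  have fin: "finite (centered_arcs N M0)" "finite (centered_arcs N E)"
    "finite (coupled_arcs N M0)" "finite (coupled_arcs N E)"
    "finite (asymmetric_arcs N M0)" "finite (asymmetric_arcs N E)"
    using f0 fE unfolding centered_arcs_def coupled_arcs_def asymmetric_arcs_def by auto
  have dC: "centered_arcs N M0 \<inter> centered_arcs N E = {}"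
    using d unfolding centered_arcs_def by blast
  have dP: "coupled_arcs N M0 \<inter> coupled_arcs N E = {}"
    using d unfolding coupled_arcs_def by blast
  have dA: "asymmetric_arcs N M0 \<inter> asymmetric_arcs N E = {}"
    using d unfolding asymmetric_arcs_def by blast
  have cn: "cnum N (M0 \<union> E) = cnum N M0 + cnum N E"
    unfolding cnum_def C using card_Un_disjoint[OF fin(1,2) dC] .
  have dn: "danum N (M0 \<union> E) = danum N M0 + danum N E"
    unfolding danum_def A using card_Un_disjoint[OF fin(5,6) dA] .
  have e1: "even (card (coupled_arcs N M0))" using coupled_even[OF f0] sub by blast
  have e2: "even (card (coupled_arcs N E))" using coupled_even[OF fE] sub by blast
  have pn: "pnum N (M0 \<union> E) = pnum N M0 + pnum N E"
    unfolding pnum_def P card_Un_disjoint[OF fin(3,4) dP] using e1 e2 by (auto elim!: evenE)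
  show ?thesis unfolding wt_def cn dn pn by (simp add: power_add)
qed

lemma invs_sub: "invs N X \<Longrightarrow> x \<in> X \<Longrightarrow> x \<in> {1..2*N}"
  unfolding invs_def by blast

lemma wt_union_inv:
  assumes X: "finite X" and iY: "invs N Y" and iX: "invs N X" and YX: "Y \<subseteq> X"
    and E: "E \<in> PM Y" and M0: "M0 \<in> PM (X - Y)"
  shows "wt r s t N (M0 \<union> E) = wt r s t N M0 * wt r s t N E"
proof (rule wt_union)
  show "finite M0" using pm_arcs_finite[OF _ M0] X by simp
  show "finite E" using pm_arcs_finite[OF _ E] X YX finite_subset by blast
  show "M0 \<inter> E = {}" using pm_disj[OF E M0] by blast
  show "\<forall>e\<in>M0 \<union> E. e \<subseteq> {1..2*N}"
    using pm_sub[OF M0] pm_sub[OF E] YX iX unfolding invs_def by blast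
  show "\<forall>e\<in>M0. refl_set N e \<notin> E"
  proof (intro ballI notI)
    fix e assume e: "e \<in> M0" and r: "refl_set N e \<in> E"
    obtain x where x: "x \<in> e" using pm_nonempty_arc[OF M0 e] by blast
    have xX: "x \<in> X - Y" using pm_sub[OF M0 e] x by blast
    have "sg N x \<in> Y" using pm_sub[OF E r] x unfolding refl_sg by blast
    then have "sg N (sg N x) \<in> Y" using iY unfolding invs_def by blast
    moreover have "sg N (sg N x) = x" using sg_sg invs_sub[OF iX] xX by blast
    ultimately show False using xX by simp
  qed
  show "\<forall>e\<in>E. refl_set N e \<notin> M0"
  proof (intro ballI notI)
    fix e assume e: "e \<in> E" and r: "refl_set N e \<in> M0"
    obtain x where x: "x \<in> e" using pm_nonempty_arc[OF E e] by blast
    have xY: "x \<in> Y" using pm_sub[OF E e] x by blast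
    have "sg N x \<in> X - Y" using pm_sub[OF M0 r] x unfolding refl_sg by blast
    moreover have "sg N x \<in> Y" using iY xY unfolding invs_def by blast
    ultimately show False by simp
  qed
qed

lemma wt_center:
  assumes a: "a \<in> {1..2*N}"
  shows "wt r s t N {{a, sg N a}} = r"
proof -
  have rf: "refl_set N {a, sg N a} = {a, sg N a}"
    unfolding refl_pair using sg_sg[OF a] by auto
  have "centered_arcs N {{a, sg N a}} = {{a, sg N a}}" unfolding centered_arcs_def using rf by auto
  moreover have "coupled_arcs N {{a, sg N a}} = {}" unfolding coupled_arcs_def using rf by auto
  moreover have "asymmetric_arcs N {{a, sg N a}} = {}" unfolding asymmetric_arcs_def using rf by auto
  ultimately show ?thesis unfolding wt_def cnum_def pnum_def danum_def by simp
qed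

lemma wt_pair:
  assumes a: "a \<in> {1..2*N}" and u: "u \<in> {1..2*N}" and ua: "u \<noteq> a" and ua': "u \<noteq> sg N a"
  shows "wt r s t N {{a, u}, {sg N a, sg N u}} = s"
proof -
  have r1: "refl_set N {a, u} = {sg N a, sg N u}" by (rule refl_pair)
  have r2: "refl_set N {sg N a, sg N u} = {a, u}" unfolding refl_pair using sg_sg[OF a] sg_sg[OF u] by simp
  have ne: "{a, u} \<noteq> {sg N a, sg N u}"
  proof
    assume "{a, u} = {sg N a, sg N u}"
    then have "a = sg N a \<or> a = sg N u" by blast
    moreover have "a \<noteq> sg N a" using sg_neq by metis
    moreover have "a \<noteq> sg N u" using ua' sg_sg[OF u] by metis
    ultimately show False by blast
  qed
  have "centered_arcs N {{a, u}, {sg N a, sg N u}} = {}" unfolding centered_arcs_def using r1 r2 ne by auto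
  moreover have "coupled_arcs N {{a, u}, {sg N a, sg N u}} = {{a, u}, {sg N a, sg N u}}"
    unfolding coupled_arcs_def using r1 r2 ne by auto
  moreover have "asymmetric_arcs N {{a, u}, {sg N a, sg N u}} = {}"
    unfolding asymmetric_arcs_def using r1 r2 by auto
  ultimately show ?thesis unfolding wt_def cnum_def pnum_def danum_def using ne by simp
qed

lemma wt_asym:
  assumes "\<forall>e\<in>E. refl_set N e \<notin> E"
  shows "wt r s t N E = t ^ card E"
proof -
  have "centered_arcs N E = {}" unfolding centered_arcs_def using assms by auto
  moreover have "coupled_arcs N E = {}" unfolding coupled_arcs_def using assms by auto
  moreover have "asymmetric_arcs N E = E" unfolding asymmetric_arcs_def using assms by auto
  ultimately show ?thesis unfolding wt_def cnum_def pnum_def danum_def by simp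
qed


lemma pm_single: "a \<noteq> b \<Longrightarrow> {{a,b}} \<in> PM {a,b}"
  unfolding PM_def by auto

lemma pm_two:
  assumes "a \<noteq> b" "c \<noteq> d" "c \<noteq> a" "c \<noteq> b" "d \<noteq> a" "d \<noteq> b"
  shows "{{a,b},{c,d}} \<in> PM {a,b,c,d}"
proof -
  have "{{c,d}} \<union> {{a,b}} \<in> PM ({a,b} \<union> {c,d})"
    by (rule pm_union[OF pm_single pm_single]) (use assms in auto)
  moreover have "{{c,d}} \<union> {{a,b}} = {{a,b},{c,d}}" "{a,b} \<union> {c,d} = {a,b,c,d}" by auto
  ultimately show ?thesis by simp
qed

lemma pm_three:
  assumes "a \<noteq> b" "c \<noteq> d" "c \<noteq> a" "c \<noteq> b" "d \<noteq> a" "d \<noteq> b"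
    "e \<noteq> f" "e \<notin> {a,b,c,d}" "f \<notin> {a,b,c,d}"
  shows "{{e,f},{a,b},{c,d}} \<in> PM {e,f,a,b,c,d}"
proof -
  have "{{a,b},{c,d}} \<union> {{e,f}} \<in> PM ({e,f} \<union> {a,b,c,d})"
    by (rule pm_union[OF pm_single pm_two]) (use assms in auto)
  moreover have "{{a,b},{c,d}} \<union> {{e,f}} = {{e,f},{a,b},{c,d}}" "{e,f} \<union> {a,b,c,d} = {e,f,a,b,c,d}" by auto
  ultimately show ?thesis by simp
qed

lemma invs_diff: "invs N X \<Longrightarrow> invs N Y \<Longrightarrow> invs N (X - Y)"
  unfolding invs_def by (metis DiffD1 DiffD2 DiffI sg_sg subset_iff Diff_subset order_trans)

lemma invs_union: "invs N X \<Longrightarrow> invs N Y \<Longrightarrow> invs N (X \<union> Y)"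
  unfolding invs_def by blast

lemma invs_pair: "a \<in> {1..2*N} \<Longrightarrow> invs N {a, sg N a}"
  unfolding invs_def using sg_in sg_sg by auto

lemma invs_finite: "invs N X \<Longrightarrow> finite X"
  unfolding invs_def using finite_subset by blast

lemma invs_even: "invs N X \<Longrightarrow> even (card X)"
proof -
  assume iX: "invs N X"
  show ?thesis
  proof (rule even_invol[where f = "sg N"])
    show "finite X" using invs_finite[OF iX] .
    show "\<forall>x\<in>X. sg N x \<in> X \<and> sg N x \<noteq> x \<and> sg N (sg N x) = x"
      using iX sg_neq sg_sg invs_sub[OF iX] unfolding invs_def by blast
  qed
qed

definition WW :: "real \<Rightarrow> real \<Rightarrow> real \<Rightarrow> nat \<Rightarrow> nat set \<Rightarrow> real" where
  "WW r s t N X = (\<Sum>M\<in>PM X. wt r s t N M)"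

lemma block2:
  assumes iX: "invs N X" and iB: "invs N B" and BX: "B \<subseteq> X" and E: "E \<in> PM B"
  shows "(\<Sum>M0\<in>PM (X - B). wt r s t N (M0 \<union> E)) = wt r s t N E * WW r s t N (X - B)"
proof -
  have "(\<Sum>M0\<in>PM (X - B). wt r s t N (M0 \<union> E)) = (\<Sum>M0\<in>PM (X - B). wt r s t N M0 * wt r s t N E)"
    by (rule sum.cong[OF refl], rule wt_union_inv[OF invs_finite[OF iX] iB iX BX E])
  then show ?thesis unfolding WW_def by (simp add: sum_distrib_left mult.commute)
qed

lemma block1:
  assumes iX: "invs N X" and iB: "invs N B" and BX: "B \<subseteq> X" and E: "E \<in> PM B"
  shows "(\<Sum>M\<in>{M\<in>PM X. E \<subseteq> M}. wt r s t N M) = wt r s t N E * WW r s t N (X - B)"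
  using sum_remove[OF invs_finite[OF iX] E BX, where g = "wt r s t N"] block2[OF assms, of r s t] by simp


fun ww :: "real \<Rightarrow> real \<Rightarrow> real \<Rightarrow> nat \<Rightarrow> real" where
  "ww r s t 0 = 1"
| "ww r s t (Suc 0) = r"
| "ww r s t (Suc (Suc 0)) = r^2 + 2*s"
| "ww r s t (Suc (Suc (Suc k))) =
     r * ww r s t (Suc (Suc k)) + 2 * real (k+2) * s * ww r s t (Suc k)
     + 4 * real (k+2) * real (k+1) * t^3 * ww r s t k
     + 2 * real (k+2) * t * ww r s t (Suc (Suc k))
     - 2 * real (k+2) * r * t * ww r s t (Suc k)
     - 4 * real (k+2) * real (k+1) * s * t * ww r s t k"

lemma ww_rec:
  "ww r s t (Suc m) =
     r * ww r s t m + 2 * real m * s * ww r s t (m-1)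
     + 4 * real m * (real m - 1) * t^3 * ww r s t (m-2)
     + 2 * real m * t * ww r s t m
     - 2 * real m * r * t * ww r s t (m-1)
     - 4 * real m * (real m - 1) * s * t * ww r s t (m-2)"
proof (cases m)
  case 0 then show ?thesis by simp
next
  case (Suc k)
  then show ?thesis
  proof (cases k)
    case 0 then show ?thesis using Suc by (simp add: power2_eq_square algebra_simps)
  next
    case (Suc j)
    then show ?thesis using \<open>m = Suc k\<close> by (simp add: algebra_simps)
  qed
qed

lemma gchoose_step:
  fixes a :: real
  shows "real (Suc n) * (a gchoose Suc n) = (a gchoose n) * (a - real n)"
proof -
  have "fact (Suc n) * (a gchoose Suc n) = (\<Prod>i = 0..<Suc n. a - of_nat i)"
    by (rule gbinomial_mult_fact)
  also have "\<dots> = (\<Prod>i = 0..<n. a - of_nat i) * (a - real n)" by simp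
  also have "\<dots> = fact n * (a gchoose n) * (a - real n)"
    by (simp add: gbinomial_mult_fact)
  finally have "fact n * (real (Suc n) * (a gchoose Suc n)) = fact n * ((a gchoose n) * (a - real n))"
    by (simp add: algebra_simps)
  then show ?thesis by simp
qed

lemma B_ode:
  fixes t :: real
  defines "B \<equiv> fps_binomial (- 1/2) oo (fps_const (- 2 * t) * fps_X)"
  shows "(1 - fps_const (2*t) * fps_X) * fps_deriv B = fps_const t * B"
proof -
  have B: "B = Abs_fps (\<lambda>n. (- 2 * t)^n * ((- 1/2) gchoose n))"
    unfolding B_def by (simp add: fps_compose_linear)
  show ?thesis
  proof (rule fps_ext)
    fix n
    have g: "real (Suc n) * ((- 1/2 :: real) gchoose Suc n) = ((- 1/2) gchoose n) * (- 1/2 - real n)"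
      by (rule gchoose_step)
    have "((1 - fps_const (2*t) * fps_X) * fps_deriv B) $ n
        = fps_deriv B $ n - 2 * t * (fps_X * fps_deriv B) $ n"
    proof -
      have "(1 - fps_const (2*t) * fps_X) * fps_deriv B = fps_deriv B - fps_const (2*t) * (fps_X * fps_deriv B)"
        by (simp add: algebra_simps)
      then show ?thesis by (simp del: fps_X_mult_nth)
    qed
    also have "\<dots> = (real (Suc n)) * ((- 2 * t)^(Suc n) * ((- 1/2) gchoose Suc n))
        - 2 * t * (real n * ((- 2 * t)^n * ((- 1/2) gchoose n)))"
      by (cases n) (simp_all add: B algebra_simps)
    also have "\<dots> = t * ((- 2 * t)^n * ((- 1/2) gchoose n))"
    proof -
      define P where "P = (- 2 * t :: real)^n"
      define g0 where "g0 = ((- 1/2 :: real) gchoose n)"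
      define g1 where "g1 = ((- 1/2 :: real) gchoose Suc n)"
      have h: "real (Suc n) * g1 = g0 * (- 1/2 - real n)" using g by (simp add: g0_def g1_def)
      have h1: "g1 = g0 * (- 1/2 - real n) / real (Suc n)" using h
        by (simp add: field_simps del: of_nat_Suc)
      have "real (Suc n) * ((- 2 * t) * P * g1) - 2 * t * (real n * (P * g0)) = t * (P * g0)"
        unfolding h1 by (simp add: field_simps del: of_nat_Suc)
      then show ?thesis by (simp add: P_def g0_def g1_def mult.assoc)
    qed
    also have "\<dots> = (fps_const t * B) $ n" by (simp add: B)
    finally show "((1 - fps_const (2*t) * fps_X) * fps_deriv B) $ n = (fps_const t * B) $ n" .
  qed
qed

lemma F_ode:
  fixes r s t :: real
  defines "F \<equiv> fps_exp (r - t) * (fps_exp (s - t\<^sup>2) oo fps_X\<^sup>2)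
           * (fps_binomial (- 1/2) oo (fps_const (- 2 * t) * fps_X))"
  shows "(1 - fps_const (2*t) * fps_X) * fps_deriv F =
     fps_const r * F + fps_const (2*s - 2*r*t) * (fps_X * F) + fps_const (4*t*(t^2 - s)) * (fps_X * (fps_X * F))"
proof -
  define E1 where "E1 = fps_exp (r - t)"
  define E2 where "E2 = (fps_exp (s - t\<^sup>2) oo fps_X\<^sup>2)"
  define B where "B = fps_binomial (- 1/2) oo (fps_const (- 2 * t) * fps_X)"
  define L where "L = (1 - fps_const (2*t) * fps_X :: real fps)"
  have F: "F = E1 * E2 * B" unfolding F_def E1_def E2_def B_def ..
  have d1: "fps_deriv E1 = fps_const (r-t) * E1" by (simp add: E1_def)
  have d2: "fps_deriv E2 = fps_const (s-t\<^sup>2) * (2 * fps_X) * E2"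
  proof -
    have "fps_deriv E2 = (fps_deriv (fps_exp (s - t\<^sup>2)) oo fps_X\<^sup>2) * fps_deriv (fps_X\<^sup>2)"
      unfolding E2_def by (rule fps_compose_deriv) simp
    also have "\<dots> = (fps_const (s - t\<^sup>2) * (fps_exp (s - t\<^sup>2) oo fps_X\<^sup>2)) * (2 * fps_X)"
      by (simp add: fps_const_mult_apply_left fps_deriv_power numeral_2_eq_2 numeral_fps_const)
    finally show ?thesis unfolding E2_def by (simp add: algebra_simps)
  qed
  have c4: "fps_const (2::real) * fps_const 2 = fps_const 4" by simp
  have d3: "L * fps_deriv B = fps_const t * B" unfolding L_def B_def by (rule B_ode)
  have "L * fps_deriv F = fps_const (r-t) * L * F + fps_const (s-t\<^sup>2) * (2 * fps_X) * L * F + E1 * E2 * (L * fps_deriv B)"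
    by (simp add: F d1 d2 algebra_simps)
  also have "\<dots> = (fps_const (r-t) * L + fps_const (s-t\<^sup>2) * (2 * fps_X) * L + fps_const t) * F"
    by (simp add: d3 F algebra_simps)
  also have "fps_const (r-t) * L + fps_const (s-t\<^sup>2) * (2 * fps_X) * L + fps_const t
      = fps_const r + fps_const (2*s - 2*r*t) * fps_X + fps_const (4*t*(t^2 - s)) * (fps_X * fps_X)"
    by (simp add: L_def algebra_simps power2_eq_square numeral_fps_const c4 flip: fps_const_mult fps_const_add fps_const_neg fps_const_sub)
  finally show ?thesis unfolding L_def by (simp add: algebra_simps)
qed

lemma coeff_rec_abs:
  fixes F :: "real fps"
  assumes ode: "(1 - fps_const (2*t) * fps_X) * fps_deriv F =
     fps_const r * F + fps_const (2*s - 2*r*t) * (fps_X * F) + fps_const (4*t*(t^2 - s)) * (fps_X * (fps_X * F))"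
  shows "real (Suc m) * F$(Suc m) = (r + 2*t*real m) * F$m
     + (if m = 0 then 0 else (2*s - 2*r*t) * F$(m-1))
     + (if m \<le> 1 then 0 else 4*t*(t^2-s) * F$(m-2))"
proof -
  have "(1 - fps_const (2*t) * fps_X) * fps_deriv F = fps_deriv F - fps_const (2*t) * (fps_X * fps_deriv F)"
    by (simp add: algebra_simps)
  with ode have E0: "(fps_deriv F - fps_const (2*t) * (fps_X * fps_deriv F)) $ m =
     (fps_const r * F + fps_const (2*s - 2*r*t) * (fps_X * F) + fps_const (4*t*(t^2 - s)) * (fps_X * (fps_X * F))) $ m"
    by simp
  show ?thesis
  proof (cases m)
    case 0 then show ?thesis using E0 by simp
  next
    case (Suc k)
    show ?thesis
    proof (cases k)
      case 0
      have "real (Suc (Suc 0)) * F$(Suc (Suc 0)) - 2*t*(1 * F$1) = r * F$1 + (2*s - 2*r*t) * F$0"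
        using E0 \<open>m = Suc k\<close> 0 by simp
      then show ?thesis using \<open>m = Suc k\<close> 0 by (simp add: algebra_simps)
    next
      case (Suc j)
      have "real (Suc m) * F$(Suc m) - 2*t*(real m * F$m) = r * F$m + (2*s - 2*r*t) * F$(Suc j) + 4*t*(t^2 - s) * F$j"
        using E0 \<open>m = Suc k\<close> Suc by (simp del: of_nat_Suc)
      then show ?thesis using \<open>m = Suc k\<close> Suc by (simp add: algebra_simps del: of_nat_Suc)
    qed
  qed
qed

lemma ww_fps_abs:
  fixes F :: "real fps"
  assumes F0: "F$0 = 1"
  and rec: "\<And>m. real (Suc m) * F$(Suc m) = (r + 2*t*real m) * F$m
     + (if m = 0 then 0 else (2*s - 2*r*t) * F$(m-1))
     + (if m \<le> 1 then 0 else 4*t*(t^2-s) * F$(m-2))"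
  shows "ww r s t n = fact n * F$n"
proof (induction n rule: less_induct)
  case (less n)
  show ?case
  proof (cases n)
    case 0 then show ?thesis by (simp add: F0)
  next
    case (Suc m)
    show ?thesis
    proof (cases m)
      case 0
      then show ?thesis using rec[of 0] Suc F0 by simp
    next
      case (Suc k)
      show ?thesis
      proof (cases k)
        case 0
        have r1: "F$1 = r" using rec[of 0] F0 by simp
        have "2 * F$2 = (r + 2*t) * F$1 + (2*s - 2*r*t) * F$0" using rec[of 1] by (simp add: numeral_2_eq_2)
        then have "2 * F$2 = r^2 + 2*s" using r1 F0 by (simp add: algebra_simps power2_eq_square)
        then show ?thesis using \<open>n = Suc m\<close> \<open>m = Suc k\<close> 0 by (simp add: numeral_2_eq_2)
      next
        case (Suc j)
        have n: "n = Suc (Suc (Suc j))" using \<open>n = Suc m\<close> \<open>m = Suc k\<close> Suc by simp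
        have I0: "ww r s t j = fact j * F$j" using less n by simp
        have I1: "ww r s t (Suc j) = fact (Suc j) * F$(Suc j)" using less n by simp
        have I2: "ww r s t (Suc (Suc j)) = fact (Suc (Suc j)) * F$(Suc (Suc j))" using less n by simp
        have R: "real (Suc (Suc (Suc j))) * F$(Suc (Suc (Suc j))) = (r + 2*t*real (Suc (Suc j))) * F$(Suc (Suc j))
           + (2*s - 2*r*t) * F$(Suc j) + 4*t*(t^2-s) * F$j"
          using rec[of "Suc (Suc j)"] by simp
        define a0 where "a0 = F$j"
        define a1 where "a1 = F$(Suc j)"
        define a2 where "a2 = F$(Suc (Suc j))"
        define a3 where "a3 = F$(Suc (Suc (Suc j)))"
        define fj where "fj = (fact j :: real)"
        have f1: "fact (Suc j) = (real j + 1) * fj" by (simp add: fj_def)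
        have f2: "fact (Suc (Suc j)) = (real j + 2) * ((real j + 1) * fj)" by (simp add: fj_def algebra_simps)
        have f3: "fact (Suc (Suc (Suc j))) = (real j + 3) * ((real j + 2) * ((real j + 1) * fj))" by (simp add: fj_def algebra_simps)
        have R': "(real j + 3) * a3 = (r + 2*t*(real j + 2)) * a2 + (2*s - 2*r*t) * a1 + 4*t*(t^2-s) * a0"
          using R unfolding a0_def a1_def a2_def a3_def by (simp add: algebra_simps)
        have "ww r s t n = r * ((real j + 2) * ((real j + 1) * fj) * a2) + 2 * (real j+2) * s * ((real j + 1) * fj * a1)
           + 4 * (real j+2) * (real j+1) * t^3 * (fj * a0)
           + 2 * (real j+2) * t * ((real j + 2) * ((real j + 1) * fj) * a2)
           - 2 * (real j+2) * r * t * ((real j + 1) * fj * a1)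
           - 4 * (real j+2) * (real j+1) * s * t * (fj * a0)"
          unfolding n ww.simps I0 I1 I2 f1 f2 a0_def a1_def a2_def fj_def by (simp add: algebra_simps)
        also have "\<dots> = (real j + 2) * ((real j + 1) * fj) * ((r + 2*t*(real j + 2)) * a2 + (2*s - 2*r*t) * a1 + 4*t*(t^2-s) * a0)"
          by (simp add: algebra_simps power2_eq_square power3_eq_cube)
        also have "\<dots> = fact n * F$n" unfolding R'[symmetric] n f3 a3_def by (simp add: algebra_simps)
        finally show ?thesis .
      qed
    qed
  qed
qed

lemma fps_final:
  fixes r s t :: real
  shows "Abs_fps (\<lambda>n. ww r s t n / fact n) = fps_exp (r - t) * (fps_exp (s - t\<^sup>2) oo fps_X\<^sup>2)
           * (fps_binomial (- 1/2) oo (fps_const (- 2 * t) * fps_X))" (is "_ = ?F")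
proof (rule fps_ext)
  fix n
  have "ww r s t n = fact n * ?F$n"
  proof (rule ww_fps_abs)
    show "?F$0 = 1" by simp
    show "real (Suc m) * ?F$(Suc m) = (r + 2*t*real m) * ?F$m
     + (if m = 0 then 0 else (2*s - 2*r*t) * ?F$(m-1))
     + (if m \<le> 1 then 0 else 4*t*(t^2-s) * ?F$(m-2))" for m
      by (rule coeff_rec_abs) (rule F_ode)
  qed
  then show "Abs_fps (\<lambda>n. ww r s t n / fact n) $ n = ?F $ n" by simp
qed


lemma sg_eq_iff: "x \<in> {1..2*N} \<Longrightarrow> y \<in> {1..2*N} \<Longrightarrow> sg N x = y \<longleftrightarrow> x = sg N y"
  by (auto simp: sg_def)

lemma refl_mem: "e \<subseteq> {1..2*N} \<Longrightarrow> y \<in> refl_set N e \<Longrightarrow> sg N y \<in> e"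
  unfolding refl_sg using sg_sg by auto

lemma partner_sum:
  assumes M: "M \<in> PM X" and x: "x \<in> X" and X: "finite X"
  shows "(\<Sum>v\<in>X-{x}. if {x,v} \<in> M then (w::real) else 0) = w"
proof -
  obtain u0 where u0: "{x,u0} \<in> M" using pm_partner[OF M x] by blast
  have u0X: "u0 \<in> X - {x}" using pm_partner_neq[OF M u0] by auto
  have "(\<Sum>v\<in>X-{x}. if {x,v} \<in> M then w else 0) = (\<Sum>v\<in>X-{x}. if v = u0 then w else 0)"
  proof (rule sum.cong[OF refl])
    fix v assume "v \<in> X - {x}"
    have "{x,v} \<in> M \<longleftrightarrow> v = u0" using pm_partner[OF M x] u0 by blast
    then show "(if {x,v} \<in> M then w else 0) = (if v = u0 then w else 0)" by simp
  qed
  also have "\<dots> = w" using u0X X by (simp add: sum.delta)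
  finally show ?thesis .
qed

lemma ident:
  assumes M: "M \<in> PM Y" and u: "u \<in> Y" and u': "u' \<in> Y" "u' \<noteq> u" and Y: "finite Y"
  shows "(\<Sum>v\<in>Y-{u,u'}. if {u,v} \<in> M \<and> \<not> Q v then (w::real) else 0)
       = w - (if {u,u'} \<in> M then w else 0) - (\<Sum>v\<in>Y-{u,u'}. if {u,v} \<in> M \<and> Q v then w else 0)"
proof -
  have e1: "Y - {u} = insert u' (Y - {u,u'})" using u' by auto
  have "w = (\<Sum>v\<in>Y-{u}. if {u,v} \<in> M then w else 0)" using partner_sum[OF M u Y] by simp
  also have "\<dots> = (if {u,u'} \<in> M then w else 0) + (\<Sum>v\<in>Y-{u,u'}. if {u,v} \<in> M then w else 0)"
    unfolding e1 using Y by (simp add: sum.insert)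
  also have "(\<Sum>v\<in>Y-{u,u'}. if {u,v} \<in> M then w else 0)
     = (\<Sum>v\<in>Y-{u,u'}. (if {u,v} \<in> M \<and> Q v then w else 0) + (if {u,v} \<in> M \<and> \<not> Q v then w else 0))"
    by (rule sum.cong) auto
  also have "\<dots> = (\<Sum>v\<in>Y-{u,u'}. if {u,v} \<in> M \<and> Q v then w else 0) + (\<Sum>v\<in>Y-{u,u'}. if {u,v} \<in> M \<and> \<not> Q v then w else 0)"
    by (rule sum.distrib)
  finally show ?thesis by simp
qed


lemma w4:
  assumes iX: "invs N X" and a: "a \<in> X" and u: "u \<in> X" "u \<noteq> a" "u \<noteq> sg N a"
    and v: "v \<in> X" "v \<notin> {a, sg N a, u, sg N u}"
    and M1: "M1 \<in> PM (X - {a,u} - {sg N a, v})" and nc: "{sg N u, sg N v} \<notin> M1"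
  shows "wt r s t N (M1 \<union> {{sg N a, v}} \<union> {{a,u}}) = t * wt r s t N (M1 \<union> {{u,v}})"
proof -
  define a' where "a' = sg N a"
  define u' where "u' = sg N u"
  define v' where "v' = sg N v"
  define Q where "Q = X - {a,u} - {a',v}"
  have I: "a \<in> {1..2*N}" "u \<in> {1..2*N}" "v \<in> {1..2*N}" using invs_sub[OF iX] a u v by auto
  have I': "a' \<in> {1..2*N}" "u' \<in> {1..2*N}" "v' \<in> {1..2*N}" using sg_in I unfolding a'_def u'_def v'_def by auto
  have ss: "sg N a' = a" "sg N u' = u" "sg N v' = v" using sg_sg I unfolding a'_def u'_def v'_def by auto
  have d: "a' \<noteq> a" "u' \<noteq> u" "v' \<noteq> v" using sg_neq unfolding a'_def u'_def v'_def by metis+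
  have d2: "u \<noteq> a" "u \<noteq> a'" "v \<noteq> a" "v \<noteq> a'" "v \<noteq> u" "v \<noteq> u'" using u v unfolding a'_def u'_def by auto
  have ds: "sg N a = a'" "sg N u = u'" "sg N v = v'" unfolding a'_def u'_def v'_def by simp_all
  have d3: "u' \<noteq> a" "u' \<noteq> a'" "v' \<noteq> a" "v' \<noteq> a'" "v' \<noteq> u" "v' \<noteq> u'"
    subgoal using d2 ss ds by metis
    subgoal using d2 ss ds by metis
    subgoal using d2 ss ds by metis
    subgoal using d2 ss ds by metis
    subgoal using d2 ss ds by metis
    subgoal using d2 ss ds by metis
    done
  have M1': "M1 \<in> PM Q" using M1 unfolding Q_def a'_def .
  have QX: "Q \<subseteq> X" unfolding Q_def by blast
  have fQ: "finite Q" using invs_finite[OF iX] QX finite_subset by blast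
  have fM1: "finite M1" using pm_arcs_finite[OF fQ M1'] .
  have subM1: "\<forall>e\<in>M1. e \<subseteq> {1..2*N}" using pm_sub[OF M1'] QX invs_sub[OF iX] by blast
  have notQ: "a \<notin> Q" "a' \<notin> Q" "u \<notin> Q" unfolding Q_def by auto
  have arcQ: "\<And>e x. e \<in> M1 \<Longrightarrow> x \<in> e \<Longrightarrow> x \<in> Q" using pm_sub[OF M1'] by blast
  have reflM1: "\<And>e x. e \<in> M1 \<Longrightarrow> x \<in> refl_set N e \<Longrightarrow> sg N x \<in> Q"
    using refl_mem subM1 arcQ by blast
  have r1: "refl_set N {a',v} = {a,v'}" using ss unfolding refl_pair v'_def by simp
  have r2: "refl_set N {a,u} = {a',u'}" unfolding refl_pair a'_def u'_def by simp
  have L: "wt r s t N (M1 \<union> {{a',v},{a,u}}) = wt r s t N M1 * wt r s t N {{a',v},{a,u}}"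
  proof (rule wt_union)
    show "finite M1" by (rule fM1)
    show "finite {{a',v},{a,u}}" by simp
    show "M1 \<inter> {{a',v},{a,u}} = {}" using arcQ notQ by blast
    show "\<forall>e\<in>M1 \<union> {{a',v},{a,u}}. e \<subseteq> {1..2*N}" using subM1 I I' by auto
    show "\<forall>e\<in>M1. refl_set N e \<notin> {{a',v},{a,u}}"
    proof (intro ballI notI)
      fix e assume e: "e \<in> M1" and r: "refl_set N e \<in> {{a',v},{a,u}}"
      then have "a' \<in> refl_set N e \<or> a \<in> refl_set N e" by blast
      then have "sg N a' \<in> Q \<or> sg N a \<in> Q" using reflM1[OF e] by blast
      then show False using notQ ss unfolding a'_def by auto
    qed
    show "\<forall>e\<in>{{a',v},{a,u}}. refl_set N e \<notin> M1"
    proof (intro ballI notI)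
      fix e assume e: "e \<in> {{a',v},{a,u}}" and r: "refl_set N e \<in> M1"
      have "refl_set N e = {a, v'} \<or> refl_set N e = {a', u'}"
        using e r1 r2 by auto
      then show False using arcQ[OF r] notQ by blast
    qed
  qed
  have wE: "wt r s t N {{a',v},{a,u}} = t^2"
  proof -
    have "{a,v'} \<noteq> {a',v}" using d d2 d3 by (auto simp: doubleton_eq_iff)
    moreover have "{a,v'} \<noteq> {a,u}" using d d2 d3 by (auto simp: doubleton_eq_iff)
    moreover have "{a',u'} \<noteq> {a',v}" using d d2 d3 by (auto simp: doubleton_eq_iff)
    moreover have "{a',u'} \<noteq> {a,u}" using d d2 d3 by (auto simp: doubleton_eq_iff)
    moreover have "{a',v} \<noteq> {a,u}" using d d2 d3 by (auto simp: doubleton_eq_iff)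
    ultimately have "\<forall>e\<in>{{a',v},{a,u}}. refl_set N e \<notin> {{a',v},{a,u}}" and "card {{a',v},{a,u}} = 2"
      using r1 r2 by auto
    then show ?thesis using wt_asym by metis
  qed
  have R: "wt r s t N (M1 \<union> {{u,v}}) = wt r s t N M1 * wt r s t N {{u,v}}"
  proof (rule wt_union)
    show "finite M1" by (rule fM1)
    show "finite {{u,v}}" by simp
    show "M1 \<inter> {{u,v}} = {}" using arcQ notQ by blast
    show "\<forall>e\<in>M1 \<union> {{u,v}}. e \<subseteq> {1..2*N}" using subM1 I by auto
    show "\<forall>e\<in>M1. refl_set N e \<notin> {{u,v}}"
    proof (intro ballI notI)
      fix e assume e: "e \<in> M1" and r: "refl_set N e \<in> {{u,v}}"
      then have "refl_set N (refl_set N e) = refl_set N {u,v}" by simp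
      then have "e = {u',v'}" using refl_refl subM1 e unfolding refl_pair u'_def v'_def by metis
      then show False using e nc unfolding u'_def v'_def by simp
    qed
    show "\<forall>e\<in>{{u,v}}. refl_set N e \<notin> M1"
      using nc by (simp add: refl_pair)
  qed
  have wE': "wt r s t N {{u,v}} = t"
  proof -
    have "{u',v'} \<noteq> {u,v}" using d d2 d3 by (auto simp: doubleton_eq_iff)
    then have "\<forall>e\<in>{{u,v}}. refl_set N e \<notin> {{u,v}}" unfolding u'_def v'_def by (simp add: refl_pair)
    then show ?thesis using wt_asym[of "{{u,v}}" N r s t] by simp
  qed
  have U: "M1 \<union> {{sg N a, v}} \<union> {{a,u}} = M1 \<union> {{a',v},{a,u}}" unfolding a'_def by auto
  show ?thesis unfolding U L R wE wE' by (simp add: power2_eq_square)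
qed


lemma dist6:
  assumes iX: "invs N X" and a: "a \<in> X" and u: "u \<in> X" "u \<noteq> a" "u \<noteq> a'"
    and v: "v \<in> X" "v \<notin> {a, a', u, u'}"
    and defs: "a' = sg N a" "u' = sg N u" "v' = sg N v"
  shows "a' \<noteq> a" "u' \<noteq> u" "v' \<noteq> v" "v \<noteq> a" "v \<noteq> a'" "v \<noteq> u" "v \<noteq> u'"
    "u' \<noteq> a" "u' \<noteq> a'" "v' \<noteq> a" "v' \<noteq> a'" "v' \<noteq> u" "v' \<noteq> u'"
    "a' \<in> X" "u' \<in> X" "v' \<in> X"
proof -
  have I: "a \<in> {1..2*N}" "u \<in> {1..2*N}" "v \<in> {1..2*N}" using invs_sub[OF iX] a u v by auto
  have ss: "sg N a' = a" "sg N u' = u" "sg N v' = v" using sg_sg I defs by auto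
  show d: "a' \<noteq> a" "u' \<noteq> u" "v' \<noteq> v" using sg_neq defs by metis+
  show d2: "v \<noteq> a" "v \<noteq> a'" "v \<noteq> u" "v \<noteq> u'" using v by auto
  show "u' \<noteq> a" using u ss defs by metis
  show "u' \<noteq> a'" using u ss defs by metis
  show "v' \<noteq> a" using d2 ss defs by metis
  show "v' \<noteq> a'" using d2 ss defs by metis
  show "v' \<noteq> u" using d2 ss defs by metis
  show "v' \<noteq> u'" using d2 ss defs by metis
  show "a' \<in> X" "u' \<in> X" "v' \<in> X" using iX a u v defs unfolding invs_def by auto
qed

lemma per_v:
  assumes iX: "invs N X" and a: "a \<in> X" and u: "u \<in> X" "u \<noteq> a" "u \<noteq> a'"
    and v: "v \<in> X" "v \<notin> {a, a', u, u'}"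
    and defs: "a' = sg N a" "u' = sg N u" "v' = sg N v"
  shows "(\<Sum>M1\<in>PM (X - {a,u} - {a', v}). wt r s t N (M1 \<union> {{a', v}} \<union> {{a,u}}))
     = t^3 * WW r s t N (X - ({a, a'} \<union> {u, u'} \<union> {v, v'}))
       + t * (\<Sum>M'\<in>PM (X - {a, a'}). if {u,v} \<in> M' \<and> {u', v'} \<notin> M' then wt r s t N M' else 0)"
proof -
  note D = dist6[OF assms]
  have I: "a \<in> {1..2*N}" "u \<in> {1..2*N}" "v \<in> {1..2*N}" using invs_sub[OF iX] a u v by auto
  have ss: "sg N a' = a" "sg N u' = u" "sg N v' = v" using sg_sg I defs by auto
  define Q where "Q = X - {a,u} - {a',v}"
  define Y where "Y = X - {a,a'}"
  define B6 where "B6 = {a, a'} \<union> {u, u'} \<union> {v, v'}"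
  define F where "F = (\<lambda>M1. wt r s t N (M1 \<union> {{a',v}} \<union> {{a,u}}))"
  have fX: "finite X" using invs_finite[OF iX] .
  have fQ: "finite Q" unfolding Q_def using fX by simp
  have fY: "finite Y" unfolding Y_def using fX by simp
  have split: "(\<Sum>M1\<in>PM Q. F M1) = (\<Sum>M1\<in>{M1\<in>PM Q. {{u',v'}} \<subseteq> M1}. F M1)
      + (\<Sum>M1\<in>PM Q. if {u',v'} \<in> M1 then 0 else F M1)"
  proof -
    have "(\<Sum>M1\<in>PM Q. F M1) = (\<Sum>M1\<in>PM Q. (if {u',v'} \<in> M1 then F M1 else 0) + (if {u',v'} \<in> M1 then 0 else F M1))"
      by (rule sum.cong) auto
    also have "\<dots> = (\<Sum>M1\<in>PM Q. if {u',v'} \<in> M1 then F M1 else 0) + (\<Sum>M1\<in>PM Q. if {u',v'} \<in> M1 then 0 else F M1)"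
      by (rule sum.distrib)
    also have "(\<Sum>M1\<in>PM Q. if {u',v'} \<in> M1 then F M1 else 0) = (\<Sum>M1\<in>{M1\<in>PM Q. {{u',v'}} \<subseteq> M1}. F M1)"
      using pm_finite[OF fQ] by (simp add: sum.inter_filter)
    finally show ?thesis .
  qed
  have first: "(\<Sum>M1\<in>{M1\<in>PM Q. {{u',v'}} \<subseteq> M1}. F M1) = t^3 * WW r s t N (X - B6)"
  proof -
    have uvQ: "{u',v'} \<subseteq> Q" unfolding Q_def using D by auto
    have "(\<Sum>M1\<in>{M1\<in>PM Q. {{u',v'}} \<subseteq> M1}. F M1) = (\<Sum>M2\<in>PM (Q - {u',v'}). F (M2 \<union> {{u',v'}}))"
      by (rule sum_remove[OF fQ pm_single uvQ]) (use D in auto)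
    also have "Q - {u',v'} = X - B6" unfolding Q_def B6_def by auto
    also have "(\<Sum>M2\<in>PM (X - B6). F (M2 \<union> {{u',v'}})) = (\<Sum>M2\<in>PM (X - B6). wt r s t N (M2 \<union> {{u',v'},{a',v},{a,u}}))"
    proof (rule sum.cong[OF refl])
      fix M2
      have "M2 \<union> {{u',v'}} \<union> {{a',v}} \<union> {{a,u}} = M2 \<union> {{u',v'},{a',v},{a,u}}" by auto
      then show "F (M2 \<union> {{u',v'}}) = wt r s t N (M2 \<union> {{u',v'},{a',v},{a,u}})" unfolding F_def by simp
    qed
    also have "\<dots> = wt r s t N {{u',v'},{a',v},{a,u}} * WW r s t N (X - B6)"
    proof (rule block2[OF iX])
      show "invs N B6" unfolding B6_def using invs_pair I defs by (metis invs_union)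
      show "B6 \<subseteq> X" unfolding B6_def using a u v D by auto
      have "{{u',v'},{a',v},{a,u}} \<in> PM {u',v',a',v,a,u}" by (rule pm_three) (use D u in auto)
      moreover have "{u',v',a',v,a,u} = B6" unfolding B6_def by auto
      ultimately show "{{u',v'},{a',v},{a,u}} \<in> PM B6" by simp
    qed
    also have "wt r s t N {{u',v'},{a',v},{a,u}} = t^3"
    proof -
      have r0: "refl_set N {u',v'} = {u,v}" using ss by (simp add: refl_pair)
      have r1: "refl_set N {a',v} = {a,v'}" using ss defs by (simp add: refl_pair)
      have r2: "refl_set N {a,u} = {a',u'}" using defs by (simp add: refl_pair)
      have "\<forall>e\<in>{{u',v'},{a',v},{a,u}}. refl_set N e \<notin> {{u',v'},{a',v},{a,u}}"
        using r0 r1 r2 D u by (auto simp: doubleton_eq_iff)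
      moreover have "card {{u',v'},{a',v},{a,u}} = 3"
        using D u by (auto simp: doubleton_eq_iff card_insert_if)
      ultimately show ?thesis using wt_asym by metis
    qed
    finally show ?thesis by simp
  qed
  have second: "(\<Sum>M1\<in>PM Q. if {u',v'} \<in> M1 then 0 else F M1)
      = t * (\<Sum>M'\<in>PM Y. if {u,v} \<in> M' \<and> {u', v'} \<notin> M' then wt r s t N M' else 0)"
  proof -
    define G where "G = (\<lambda>M'. if {u',v'} \<in> M' then 0 else wt r s t N M')"
    have uvY: "{u,v} \<subseteq> Y" unfolding Y_def using D u v by auto
    have ne: "{u',v'} \<noteq> {u,v}" using D by (auto simp: doubleton_eq_iff)
    have "(\<Sum>M'\<in>PM Y. if {u,v} \<in> M' \<and> {u', v'} \<notin> M' then wt r s t N M' else 0)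
        = (\<Sum>M'\<in>PM Y. if {u,v} \<in> M' then G M' else 0)"
      by (rule sum.cong) (auto simp: G_def)
    also have "\<dots> = (\<Sum>M'\<in>{M'\<in>PM Y. {{u,v}} \<subseteq> M'}. G M')"
      using pm_finite[OF fY] by (simp add: sum.inter_filter)
    also have "\<dots> = (\<Sum>M1\<in>PM (Y - {u,v}). G (M1 \<union> {{u,v}}))"
      by (rule sum_remove[OF fY pm_single uvY]) (use D in auto)
    also have "Y - {u,v} = Q" unfolding Y_def Q_def by auto
    finally have eq: "(\<Sum>M'\<in>PM Y. if {u,v} \<in> M' \<and> {u', v'} \<notin> M' then wt r s t N M' else 0)
        = (\<Sum>M1\<in>PM Q. G (M1 \<union> {{u,v}}))" .
    have "(\<Sum>M1\<in>PM Q. if {u',v'} \<in> M1 then 0 else F M1) = (\<Sum>M1\<in>PM Q. t * G (M1 \<union> {{u,v}}))"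
    proof (rule sum.cong[OF refl])
      fix M1 assume M1: "M1 \<in> PM Q"
      show "(if {u',v'} \<in> M1 then 0 else F M1) = t * G (M1 \<union> {{u,v}})"
      proof (cases "{u',v'} \<in> M1")
        case True then show ?thesis by (simp add: G_def)
      next
        case False
        have M1': "M1 \<in> PM (X - {a,u} - {sg N a, v})" using M1 defs unfolding Q_def by simp
        have "F M1 = t * wt r s t N (M1 \<union> {{u,v}})"
          unfolding F_def using w4[OF iX a u(1,2) _ v(1) _ M1', of r s t] False u v defs by simp
        then show ?thesis using False ne by (simp add: G_def)
      qed
    qed
    also have "\<dots> = t * (\<Sum>M1\<in>PM Q. G (M1 \<union> {{u,v}}))" by (simp add: sum_distrib_left)
    finally show ?thesis using eq by simp
  qed
  have "(\<Sum>M1\<in>PM (X - {a,u} - {a', v}). wt r s t N (M1 \<union> {{a', v}} \<union> {{a,u}})) = (\<Sum>M1\<in>PM Q. F M1)"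
    unfolding Q_def F_def ..
  also have "\<dots> = t^3 * WW r s t N (X - B6)
       + t * (\<Sum>M'\<in>PM Y. if {u,v} \<in> M' \<and> {u', v'} \<notin> M' then wt r s t N M' else 0)"
    using split first second by simp
  finally show ?thesis unfolding B6_def Y_def .
qed


lemma card_diff2:
  assumes "finite Y" "x \<in> Y" "y \<in> Y" "x \<noteq> y"
  shows "card (Y - {x,y}) = card Y - 2"
proof -
  have "card (Y - {x,y}) = card Y - card {x,y}" using assms by (intro card_Diff_subset) auto
  then show ?thesis using assms by simp
qed

lemma per_u:
  assumes iX: "invs N X" and a: "a \<in> X" and u: "u \<in> X" "u \<noteq> a" "u \<noteq> a'"
    and defs: "a' = sg N a" "u' = sg N u"
    and H: "\<And>Z. invs N Z \<Longrightarrow> Z \<subseteq> X - {a,a'} \<Longrightarrow> WW r s t N Z = ww r s t (card Z div 2)"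
  shows "(\<Sum>M\<in>{M\<in>PM X. {{a,u}} \<subseteq> M}. wt r s t N M)
     = s * ww r s t (card (X - {a,a'}) div 2 - 1)
       + (real (card (X - {a,a'})) - 2) * t^3 * ww r s t (card (X - {a,a'}) div 2 - 2)
       + t * (ww r s t (card (X - {a,a'}) div 2) - r * ww r s t (card (X - {a,a'}) div 2 - 1)
              - (real (card (X - {a,a'})) - 2) * s * ww r s t (card (X - {a,a'}) div 2 - 2))"
proof -
  define Y where "Y = X - {a,a'}"
  define m where "m = card Y div 2"
  define Zu where "Zu = Y - {u,u'}"
  have fX: "finite X" using invs_finite[OF iX] .
  have fY: "finite Y" unfolding Y_def using fX by simp
  have I: "a \<in> {1..2*N}" "u \<in> {1..2*N}" using invs_sub[OF iX] a u by auto
  have a'X: "a' \<in> X" "a' \<noteq> a" using iX a defs sg_neq unfolding invs_def by auto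
  have u'X: "u' \<in> X" "u' \<noteq> u" using iX u defs sg_neq unfolding invs_def by auto
  have ssu: "sg N u' = u" "sg N a' = a" using sg_sg I defs by auto
  have u'a: "u' \<noteq> a" "u' \<noteq> a'" using u ssu defs by metis+
  have uu: "u \<noteq> u'" using u'X(2) by simp
  have dv1: "(2*m - 2) div 2 = m - 1" for m :: nat by presburger
  have dv2: "(2*m - 4) div 2 = m - 2" for m :: nat by presburger
  have uY: "u \<in> Y" "u' \<in> Y" unfolding Y_def using u u'X u'a by auto
  have iY: "invs N Y" unfolding Y_def defs by (rule invs_diff[OF iX invs_pair[OF I(1)]])
  have iu: "invs N {u,u'}" unfolding defs by (rule invs_pair[OF I(2)])
  have ia: "invs N {a,a'}" unfolding defs by (rule invs_pair[OF I(1)])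
  have evY: "even (card Y)" using invs_even[OF iY] .
  have cY: "card Y = 2 * m" using evY unfolding m_def by simp
  have cZu: "card Zu = card Y - 2" unfolding Zu_def by (rule card_diff2[OF fY uY uu])
  have c2: "2 \<le> card Y" using card_mono[OF fY, of "{u,u'}"] uY u'X(2) by simp
  have m1: "1 \<le> m" using c2 cY by simp
  have rcZu: "real (card Zu) = real (card Y) - 2" using cZu c2 by simp
  have S1: "(\<Sum>M\<in>{M\<in>PM X. {{a,u}} \<subseteq> M}. wt r s t N M) = (\<Sum>M0\<in>PM (X - {a,u}). wt r s t N (M0 \<union> {{a,u}}))"
    by (rule sum_remove[OF fX pm_single]) (use u a in auto)
  have fXau: "finite (X - {a,u})" using fX by simp
  have a'Xau: "a' \<in> X - {a,u}" using a'X u by auto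
  have S2: "(\<Sum>M0\<in>PM (X - {a,u}). wt r s t N (M0 \<union> {{a,u}}))
     = (\<Sum>v\<in>X - {a,u} - {a'}. \<Sum>M0\<in>{M0\<in>PM (X - {a,u}). {{a',v}} \<subseteq> M0}. wt r s t N (M0 \<union> {{a,u}}))"
    by (rule sum_partner[OF fXau a'Xau])
  define T where "T = (\<lambda>v. \<Sum>M1\<in>PM (X - {a,u} - {a',v}). wt r s t N (M1 \<union> {{a',v}} \<union> {{a,u}}))"
  have S3: "(\<Sum>M0\<in>{M0\<in>PM (X - {a,u}). {{a',v}} \<subseteq> M0}. wt r s t N (M0 \<union> {{a,u}})) = T v"
    if v: "v \<in> X - {a,u} - {a'}" for v
    unfolding T_def by (rule sum_remove[OF fXau pm_single]) (use v a'Xau in auto)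
  have eset: "X - {a,u} - {a'} = insert u' Zu" "u' \<notin> Zu" unfolding Zu_def Y_def using u'X u'a uY by auto
  have fZu: "finite Zu" unfolding Zu_def using fY by simp
  have S4: "(\<Sum>M\<in>{M\<in>PM X. {{a,u}} \<subseteq> M}. wt r s t N M) = T u' + (\<Sum>v\<in>Zu. T v)"
    unfolding S1 S2 using S3 eset fZu by (simp add: sum.insert)
  have Tu': "T u' = s * ww r s t (m - 1)"
  proof -
    define B4 where "B4 = {a,a'} \<union> {u,u'}"
    have "T u' = (\<Sum>M1\<in>PM (X - B4). wt r s t N (M1 \<union> {{a,u},{a',u'}}))"
    proof -
      have e1: "X - {a,u} - {a',u'} = X - B4" unfolding B4_def by auto
      have e2: "\<And>M1. M1 \<union> {{a',u'}} \<union> {{a,u}} = M1 \<union> {{a,u},{a',u'}}" by auto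
      show ?thesis unfolding T_def e1 e2 ..
    qed
    also have "\<dots> = wt r s t N {{a,u},{a',u'}} * WW r s t N (X - B4)"
    proof (rule block2[OF iX])
      show "invs N B4" unfolding B4_def by (rule invs_union[OF ia iu])
      show "B4 \<subseteq> X" unfolding B4_def using a a'X u u'X by auto
      have "{{a,u},{a',u'}} \<in> PM {a,u,a',u'}" by (rule pm_two) (use a'X u'X u u'a in auto)
      moreover have "{a,u,a',u'} = B4" unfolding B4_def by auto
      ultimately show "{{a,u},{a',u'}} \<in> PM B4" by simp
    qed
    also have "wt r s t N {{a,u},{a',u'}} = s" unfolding defs by (rule wt_pair[OF I]) (use u defs in auto)
    also have "WW r s t N (X - B4) = ww r s t (m - 1)"
    proof -
      have e: "X - B4 = Y - {u,u'}" unfolding B4_def Y_def by auto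
      have "invs N (X - B4)" unfolding e by (rule invs_diff[OF iY iu])
      moreover have "X - B4 \<subseteq> X - {a,a'}" unfolding B4_def by auto
      ultimately have "WW r s t N (X - B4) = ww r s t (card (X - B4) div 2)" by (rule H)
      moreover have "card (X - B4) = card Y - 2" unfolding e by (rule card_diff2[OF fY uY uu])
      ultimately show ?thesis using cY dv1 dv2 by simp
    qed
    finally show ?thesis .
  qed
  define Ind where "Ind = (\<lambda>v M'. if {u,v} \<in> M' \<and> {u', sg N v} \<notin> M' then wt r s t N M' else 0)"
  have Tv: "T v = t^3 * ww r s t (m - 2) + t * (\<Sum>M'\<in>PM Y. Ind v M')" if v: "v \<in> Zu" for v
  proof -
    define v' where "v' = sg N v"
    have vX: "v \<in> X" "v \<notin> {a, a', u, u'}" using v unfolding Zu_def Y_def by auto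
    note D = dist6[OF iX a u vX defs v'_def]
    have "T v = t^3 * WW r s t N (X - ({a, a'} \<union> {u, u'} \<union> {v, v'}))
       + t * (\<Sum>M'\<in>PM (X - {a, a'}). if {u,v} \<in> M' \<and> {u', v'} \<notin> M' then wt r s t N M' else 0)"
      unfolding T_def by (rule per_v[OF iX a u vX defs v'_def])
    moreover have "WW r s t N (X - ({a, a'} \<union> {u, u'} \<union> {v, v'})) = ww r s t (m - 2)"
    proof -
      have e: "X - ({a, a'} \<union> {u, u'} \<union> {v, v'}) = Zu - {v,v'}" unfolding Zu_def Y_def by auto
      have vZ: "v \<in> Zu" "v' \<in> Zu" unfolding Zu_def Y_def using v D vX by auto
      have iv: "invs N {v,v'}" unfolding v'_def by (rule invs_pair) (use vX iX invs_sub in auto)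
      have "invs N (X - ({a, a'} \<union> {u, u'} \<union> {v, v'}))" unfolding e Zu_def
        by (intro invs_diff[OF _ iv] invs_diff[OF iY iu])
      moreover have "X - ({a, a'} \<union> {u, u'} \<union> {v, v'}) \<subseteq> X - {a,a'}" by auto
      ultimately have "WW r s t N (X - ({a, a'} \<union> {u, u'} \<union> {v, v'}))
          = ww r s t (card (X - ({a, a'} \<union> {u, u'} \<union> {v, v'})) div 2)" by (rule H)
      moreover have "card (X - ({a, a'} \<union> {u, u'} \<union> {v, v'})) = card Y - 4"
        unfolding e using card_diff2[OF fZu vZ] D cZu c2 by simp
      ultimately show ?thesis using cY dv1 dv2 by simp
    qed
    ultimately show ?thesis unfolding Ind_def Y_def v'_def by simp
  qed
  have sumT: "(\<Sum>v\<in>Zu. T v) = real (card Zu) * t^3 * ww r s t (m - 2) + t * (\<Sum>M'\<in>PM Y. \<Sum>v\<in>Zu. Ind v M')"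
  proof -
    have "(\<Sum>v\<in>Zu. T v) = (\<Sum>v\<in>Zu. t^3 * ww r s t (m - 2) + t * (\<Sum>M'\<in>PM Y. Ind v M'))"
      using Tv by (rule sum.cong[OF refl])
    also have "\<dots> = real (card Zu) * t^3 * ww r s t (m - 2) + t * (\<Sum>v\<in>Zu. \<Sum>M'\<in>PM Y. Ind v M')"
      by (simp add: sum.distrib sum_distrib_left)
    also have "(\<Sum>v\<in>Zu. \<Sum>M'\<in>PM Y. Ind v M') = (\<Sum>M'\<in>PM Y. \<Sum>v\<in>Zu. Ind v M')" by (rule sum.swap)
    finally show ?thesis .
  qed
  define J where "J = (\<lambda>v M'. if {u,v} \<in> M' \<and> {u', sg N v} \<in> M' then wt r s t N M' else 0)"
  have ind: "(\<Sum>v\<in>Zu. Ind v M') = wt r s t N M' - (if {u,u'} \<in> M' then wt r s t N M' else 0) - (\<Sum>v\<in>Zu. J v M')"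
    if M': "M' \<in> PM Y" for M'
    unfolding Ind_def J_def Zu_def using ident[OF M' uY u'X(2) fY, of "\<lambda>v. {u', sg N v} \<in> M'" "wt r s t N M'"]
    by simp
  have P1: "(\<Sum>M'\<in>PM Y. wt r s t N M') = ww r s t m"
    using H[OF iY] unfolding WW_def m_def Y_def by simp
  have P2: "(\<Sum>M'\<in>PM Y. if {u,u'} \<in> M' then wt r s t N M' else 0) = r * ww r s t (m - 1)"
  proof -
    have "(\<Sum>M'\<in>PM Y. if {u,u'} \<in> M' then wt r s t N M' else 0) = (\<Sum>M'\<in>{M'\<in>PM Y. {{u,u'}} \<subseteq> M'}. wt r s t N M')"
      using pm_finite[OF fY] by (simp add: sum.inter_filter)
    also have "\<dots> = wt r s t N {{u,u'}} * WW r s t N (Y - {u,u'})"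
      by (rule block1[OF iY iu]) (use uY u'X in \<open>auto intro: pm_single\<close>)
    also have "wt r s t N {{u,u'}} = r" unfolding defs by (rule wt_center[OF I(2)])
    also have "WW r s t N (Y - {u,u'}) = ww r s t (m - 1)"
    proof -
      have "WW r s t N (Y - {u,u'}) = ww r s t (card (Y - {u,u'}) div 2)"
        by (rule H) (use invs_diff[OF iY iu] in \<open>auto simp: Y_def\<close>)
      then show ?thesis using card_diff2[OF fY uY uu] cY dv1 by simp
    qed
    finally show ?thesis .
  qed
  have P3: "(\<Sum>M'\<in>PM Y. \<Sum>v\<in>Zu. J v M') = real (card Zu) * s * ww r s t (m - 2)"
  proof -
    have "(\<Sum>M'\<in>PM Y. \<Sum>v\<in>Zu. J v M') = (\<Sum>v\<in>Zu. \<Sum>M'\<in>PM Y. J v M')" by (rule sum.swap)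
    also have "\<dots> = (\<Sum>v\<in>Zu. s * ww r s t (m - 2))"
    proof (rule sum.cong[OF refl])
      fix v assume v: "v \<in> Zu"
      define v' where "v' = sg N v"
      have vX: "v \<in> X" "v \<notin> {a, a', u, u'}" using v unfolding Zu_def Y_def by auto
      note D = dist6[OF iX a u vX defs v'_def]
      have Iv: "v \<in> {1..2*N}" using vX iX invs_sub by blast
      have iv: "invs N {v,v'}" unfolding v'_def by (rule invs_pair[OF Iv])
      have vZ: "v \<in> Zu" "v' \<in> Zu" unfolding Zu_def Y_def using v D vX by auto
      define B where "B = {u,u'} \<union> {v,v'}"
      have "(\<Sum>M'\<in>PM Y. J v M') = (\<Sum>M'\<in>{M'\<in>PM Y. {{u,v},{u',v'}} \<subseteq> M'}. wt r s t N M')"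
        using pm_finite[OF fY] unfolding J_def v'_def by (simp add: sum.inter_filter)
      also have "\<dots> = wt r s t N {{u,v},{u',v'}} * WW r s t N (Y - B)"
      proof (rule block1[OF iY])
        show "invs N B" unfolding B_def by (rule invs_union[OF iu iv])
        show "B \<subseteq> Y" unfolding B_def using uY vZ unfolding Zu_def by auto
        have "{{u,v},{u',v'}} \<in> PM {u,v,u',v'}" by (rule pm_two) (use D in auto)
        moreover have "{u,v,u',v'} = B" unfolding B_def by auto
        ultimately show "{{u,v},{u',v'}} \<in> PM B" by simp
      qed
      also have "wt r s t N {{u,v},{u',v'}} = s" unfolding defs v'_def by (rule wt_pair[OF I(2) Iv]) (use D defs in auto)
      also have "WW r s t N (Y - B) = ww r s t (m - 2)"
      proof -
        have e: "Y - B = Zu - {v,v'}" unfolding B_def Zu_def by auto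
        have eqB: "Y - B = Y - {u,u'} - {v,v'}" by (auto simp: B_def)
        have iYB: "invs N (Y - B)" unfolding eqB by (rule invs_diff[OF invs_diff[OF iY iu] iv])
        have sYB: "Y - B \<subseteq> X - {a,a'}" unfolding Y_def by auto
        have "WW r s t N (Y - B) = ww r s t (card (Y - B) div 2)" by (rule H[OF iYB sYB])
        moreover have "card (Y - B) = card Y - 4" unfolding e using card_diff2[OF fZu vZ] D cZu c2 by simp
        ultimately show ?thesis using cY dv1 dv2 by simp
      qed
      finally show "(\<Sum>M'\<in>PM Y. J v M') = s * ww r s t (m - 2)" .
    qed
    also have "\<dots> = real (card Zu) * s * ww r s t (m - 2)" by simp
    finally show ?thesis .
  qed
  have P: "(\<Sum>M'\<in>PM Y. \<Sum>v\<in>Zu. Ind v M') = ww r s t m - r * ww r s t (m - 1) - real (card Zu) * s * ww r s t (m - 2)"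
  proof -
    have "(\<Sum>M'\<in>PM Y. \<Sum>v\<in>Zu. Ind v M') = (\<Sum>M'\<in>PM Y. wt r s t N M' - (if {u,u'} \<in> M' then wt r s t N M' else 0) - (\<Sum>v\<in>Zu. J v M'))"
      using ind by (rule sum.cong[OF refl])
    also have "\<dots> = (\<Sum>M'\<in>PM Y. wt r s t N M') - (\<Sum>M'\<in>PM Y. if {u,u'} \<in> M' then wt r s t N M' else 0) - (\<Sum>M'\<in>PM Y. \<Sum>v\<in>Zu. J v M')"
      by (simp add: sum_subtractf)
    finally show ?thesis unfolding P1 P2 P3 .
  qed
  have final: "(\<Sum>M\<in>{M\<in>PM X. {{a,u}} \<subseteq> M}. wt r s t N M)
     = s * ww r s t (m - 1) + (real (card Y) - 2) * t^3 * ww r s t (m - 2)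
       + t * (ww r s t m - r * ww r s t (m - 1) - (real (card Y) - 2) * s * ww r s t (m - 2))"
    unfolding S4 Tu' sumT P rcZu by simp
  then show ?thesis unfolding m_def Y_def .
qed


lemma main_comb: "invs N X \<Longrightarrow> WW r s t N X = ww r s t (card X div 2)"
proof (induction "card X" arbitrary: X rule: less_induct)
  case less
  note iX = less.prems
  show ?case
  proof (cases "X = {}")
    case True
    have "cnum N {} = 0" "pnum N {} = 0" "danum N {} = 0"
      unfolding cnum_def pnum_def danum_def centered_arcs_def coupled_arcs_def asymmetric_arcs_def by simp_all
    then show ?thesis using True by (simp add: WW_def pm_empty wt_def)
  next
    case False
    then obtain a where a: "a \<in> X" by blast
    define a' where "a' = sg N a"
    define Y where "Y = X - {a,a'}"
    define m where "m = card Y div 2"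
    have fX: "finite X" using invs_finite[OF iX] .
    have I: "a \<in> {1..2*N}" using invs_sub[OF iX] a by auto
    have a'X: "a' \<in> X" "a \<noteq> a'" using iX a sg_neq unfolding invs_def a'_def by metis+
    have ia: "invs N {a,a'}" unfolding a'_def by (rule invs_pair[OF I])
    have iY: "invs N Y" unfolding Y_def by (rule invs_diff[OF iX ia])
    have fY: "finite Y" unfolding Y_def using fX by simp
    have cY: "card Y = card X - 2" unfolding Y_def by (rule card_diff2[OF fX a a'X(1) a'X(2)])
    have c2: "2 \<le> card X" using card_mono[OF fX, of "{a,a'}"] a a'X by simp
    have evY: "even (card Y)" using invs_even[OF iY] .
    have cYm: "card Y = 2 * m" using evY unfolding m_def by simp
    have cX: "card X div 2 = Suc m" using cY c2 cYm by simp
    have H: "WW r s t N Z = ww r s t (card Z div 2)" if iZ: "invs N Z" and ZY: "Z \<subseteq> X - {a,a'}" for Z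
    proof (rule less.hyps)
      have "Z \<subset> X" using ZY a by blast
      then show "card Z < card X" using psubset_card_mono[OF fX] by blast
      show "invs N Z" by (rule iZ)
    qed
    have fXa: "finite X" by (rule fX)
    have "WW r s t N X = (\<Sum>u\<in>X-{a}. \<Sum>M\<in>{M\<in>PM X. {{a,u}} \<subseteq> M}. wt r s t N M)"
      unfolding WW_def by (rule sum_partner[OF fX a])
    also have "X - {a} = insert a' Y" "a' \<notin> Y" unfolding Y_def using a'X by auto
    then have "(\<Sum>u\<in>X-{a}. \<Sum>M\<in>{M\<in>PM X. {{a,u}} \<subseteq> M}. wt r s t N M)
       = (\<Sum>M\<in>{M\<in>PM X. {{a,a'}} \<subseteq> M}. wt r s t N M) + (\<Sum>u\<in>Y. \<Sum>M\<in>{M\<in>PM X. {{a,u}} \<subseteq> M}. wt r s t N M)"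
      using fY by (simp add: sum.insert)
    also have "(\<Sum>M\<in>{M\<in>PM X. {{a,a'}} \<subseteq> M}. wt r s t N M) = r * ww r s t m"
    proof -
      have "(\<Sum>M\<in>{M\<in>PM X. {{a,a'}} \<subseteq> M}. wt r s t N M) = wt r s t N {{a,a'}} * WW r s t N (X - {a,a'})"
        by (rule block1[OF iX ia]) (use a a'X in \<open>auto intro: pm_single\<close>)
      also have "wt r s t N {{a,a'}} = r" unfolding a'_def by (rule wt_center[OF I])
      also have "WW r s t N (X - {a,a'}) = ww r s t m"
        using H[OF iY] unfolding Y_def m_def by simp
      finally show ?thesis .
    qed
    also have "(\<Sum>u\<in>Y. \<Sum>M\<in>{M\<in>PM X. {{a,u}} \<subseteq> M}. wt r s t N M)
      = (\<Sum>u\<in>Y. s * ww r s t (m - 1)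
       + (real (card Y) - 2) * t^3 * ww r s t (m - 2)
       + t * (ww r s t m - r * ww r s t (m - 1)
              - (real (card Y) - 2) * s * ww r s t (m - 2)))"
    proof (rule sum.cong[OF refl])
      fix u assume u: "u \<in> Y"
      have uX: "u \<in> X" "u \<noteq> a" "u \<noteq> a'" using u unfolding Y_def by auto
      show "(\<Sum>M\<in>{M\<in>PM X. {{a,u}} \<subseteq> M}. wt r s t N M) = s * ww r s t (m - 1)
       + (real (card Y) - 2) * t^3 * ww r s t (m - 2)
       + t * (ww r s t m - r * ww r s t (m - 1)
              - (real (card Y) - 2) * s * ww r s t (m - 2))"
        using per_u[OF iX a uX a'_def refl H] unfolding Y_def m_def by simp
    qed
    also have "\<dots> = real (card Y) * (s * ww r s t (m - 1)
       + (real (card Y) - 2) * t^3 * ww r s t (m - 2)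
       + t * (ww r s t m - r * ww r s t (m - 1)
              - (real (card Y) - 2) * s * ww r s t (m - 2)))" by simp
    also have "r * ww r s t m + \<dots> = ww r s t (Suc m)"
      unfolding ww_rec cYm by (simp add: algebra_simps)
    finally show ?thesis using cX by simp
  qed
qed


theorem theorem5p1:
  fixes r s t :: real
  shows "Abs_fps (\<lambda>n. (\<Sum>M\<in>perfect_matchings n.
              r ^ cnum n M * s ^ pnum n M * t ^ danum n M) / fact n)
         = fps_exp (r - t) * (fps_exp (s - t\<^sup>2) oo fps_X\<^sup>2)
           * (fps_binomial (- 1/2) oo (fps_const (- 2 * t) * fps_X))"
proof -
  have "(\<Sum>M\<in>perfect_matchings n. r ^ cnum n M * s ^ pnum n M * t ^ danum n M) = ww r s t n" for n
  proof -
    have i: "invs n {1..2*n}" unfolding invs_def using sg_in by blast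
    have "(\<Sum>M\<in>perfect_matchings n. r ^ cnum n M * s ^ pnum n M * t ^ danum n M) = WW r s t n {1..2*n}"
      unfolding WW_def wt_def pm_eq ..
    also have "\<dots> = ww r s t (card {1..2*n} div 2)" by (rule main_comb[OF i])
    finally show ?thesis by simp
  qed
  then show ?thesis using fps_final[of r s t] by simp
qed

end
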